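(* Let $\mathcal C$ be an abelian category and let $\mathcal S,\mathcal T$ be subcategories of $\mathcal C$ containing the zero object. Then: (a) $(\mathcal S\mathcal T)_{\rm sub}\subseteq(\mathcal S)_{\rm sub}(\mathcal T)_{\rm sub}$; (b) $(\mathcal S\mathcal T)_{\rm quot}\subseteq(\mathcal S)_{\rm quot}(\mathcal T)_{\rm quot}$; (c) the conditions (i) $(\mathcal S\mathcal T)_{\rm ext}\subseteq(\mathcal S)_{\rm ext}(\mathcal T)_{\rm ext}$ and (ii) $(\mathcal T\mathcal S)_{\rm ext}\subseteq(\mathcal S)_{\rm ext}(\mathcal T)_{\rm ext}$ are equivalent; and if $\mathcal T$ is closed under extensions, they are also equivalent to (iii) $\mathcal T\mathcal S\subseteq(\mathcal S)_{\rm ext}\mathcal T$.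
   Context: For subcategories $\mathcal X,\mathcal Y$ of $\mathcal C$, $\mathcal X\mathcal Y$ is the class of objects $M$ admitting a short exact sequence $0\to L\to M\to N\to 0$ with $L\in\mathcal X$, $N\in\mathcal Y$. $(\mathcal X)_{\rm sub}$ (resp. $(\mathcal X)_{\rm quot}$) is the smallest subcategory containing $\mathcal X$ closed under subobjects (resp. quotient objects), i.e. all subobjects (resp. quotients) of objects of $\mathcal X$. $\mathcal X^0=\{0\}$, $\mathcal X^n=\mathcal X^{n-1}\mathcal X$, and $(\mathcal X)_{\rm ext}=\bigcup_{n\geq0}\mathcal X^n$, the smallest subcategory containing $\mathcal X$ closed under extensions; $\mathcal X$ is closed under extensions if $\mathcal X\mathcal X=\mathcal X$. *)

theory Defs
  imports Main
begin

text \<open>A category presented by its class of objects, hom-sets, composition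
  (cmp g f is g after f) and identities.\<close>

record ('o, 'm) category =
  obj :: "'o set"
  hom :: "'o \<Rightarrow> 'o \<Rightarrow> 'm set"
  cmp :: "'m \<Rightarrow> 'm \<Rightarrow> 'm"
  idm :: "'o \<Rightarrow> 'm"

definition is_category :: "('o, 'm, 'x) category_scheme \<Rightarrow> bool" where
  "is_category C \<longleftrightarrow>
     (\<forall>A\<in>obj C. idm C A \<in> hom C A A) \<and>
     (\<forall>A\<in>obj C. \<forall>B\<in>obj C. \<forall>D\<in>obj C. \<forall>f g.
        f \<in> hom C A B \<longrightarrow> g \<in> hom C B D \<longrightarrow> cmp C g f \<in> hom C A D) \<and>
     (\<forall>A\<in>obj C. \<forall>B\<in>obj C. \<forall>f. f \<in> hom C A B \<longrightarrow>
        cmp C (idm C B) f = f \<and> cmp C f (idm C A) = f) \<and>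
     (\<forall>A\<in>obj C. \<forall>B\<in>obj C. \<forall>D\<in>obj C. \<forall>E\<in>obj C. \<forall>f g h.
        f \<in> hom C A B \<longrightarrow> g \<in> hom C B D \<longrightarrow> h \<in> hom C D E \<longrightarrow>
        cmp C h (cmp C g f) = cmp C (cmp C h g) f)"

definition is_mono :: "('o, 'm, 'x) category_scheme \<Rightarrow> 'm \<Rightarrow> 'o \<Rightarrow> 'o \<Rightarrow> bool" where
  "is_mono C f A B \<longleftrightarrow> A \<in> obj C \<and> B \<in> obj C \<and> f \<in> hom C A B \<and>
     (\<forall>X\<in>obj C. \<forall>g h. g \<in> hom C X A \<longrightarrow> h \<in> hom C X A \<longrightarrow>
        cmp C f g = cmp C f h \<longrightarrow> g = h)"

definition is_epi :: "('o, 'm, 'x) category_scheme \<Rightarrow> 'm \<Rightarrow> 'o \<Rightarrow> 'o \<Rightarrow> bool" where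
  "is_epi C f A B \<longleftrightarrow> A \<in> obj C \<and> B \<in> obj C \<and> f \<in> hom C A B \<and>
     (\<forall>X\<in>obj C. \<forall>g h. g \<in> hom C B X \<longrightarrow> h \<in> hom C B X \<longrightarrow>
        cmp C g f = cmp C h f \<longrightarrow> g = h)"

definition is_zero_obj :: "('o, 'm, 'x) category_scheme \<Rightarrow> 'o \<Rightarrow> bool" where
  "is_zero_obj C Z \<longleftrightarrow> Z \<in> obj C \<and>
     (\<forall>X\<in>obj C. (\<exists>!f. f \<in> hom C Z X) \<and> (\<exists>!f. f \<in> hom C X Z))"

definition is_zero_mor :: "('o, 'm, 'x) category_scheme \<Rightarrow> 'm \<Rightarrow> 'o \<Rightarrow> 'o \<Rightarrow> bool" where
  "is_zero_mor C f A B \<longleftrightarrow> f \<in> hom C A B \<and>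
     (\<exists>Z g h. is_zero_obj C Z \<and> g \<in> hom C A Z \<and> h \<in> hom C Z B \<and> f = cmp C h g)"

definition is_kernel :: "('o, 'm, 'x) category_scheme \<Rightarrow> 'm \<Rightarrow> 'o \<Rightarrow> 'o \<Rightarrow> 'm \<Rightarrow> 'o \<Rightarrow> bool" where
  "is_kernel C k K A g B \<longleftrightarrow> K \<in> obj C \<and> A \<in> obj C \<and> B \<in> obj C \<and>
     k \<in> hom C K A \<and> g \<in> hom C A B \<and> is_zero_mor C (cmp C g k) K B \<and>
     (\<forall>X\<in>obj C. \<forall>u. u \<in> hom C X A \<longrightarrow> is_zero_mor C (cmp C g u) X B \<longrightarrow>
        (\<exists>!v. v \<in> hom C X K \<and> cmp C k v = u))"

definition is_cokernel :: "('o, 'm, 'x) category_scheme \<Rightarrow> 'm \<Rightarrow> 'o \<Rightarrow> 'o \<Rightarrow> 'm \<Rightarrow> 'o \<Rightarrow> bool" where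
  "is_cokernel C c B Q g A \<longleftrightarrow> A \<in> obj C \<and> B \<in> obj C \<and> Q \<in> obj C \<and>
     c \<in> hom C B Q \<and> g \<in> hom C A B \<and> is_zero_mor C (cmp C c g) A Q \<and>
     (\<forall>X\<in>obj C. \<forall>u. u \<in> hom C B X \<longrightarrow> is_zero_mor C (cmp C u g) A X \<longrightarrow>
        (\<exists>!v. v \<in> hom C Q X \<and> cmp C v c = u))"

definition has_product :: "('o, 'm, 'x) category_scheme \<Rightarrow> 'o \<Rightarrow> 'o \<Rightarrow> bool" where
  "has_product C A B \<longleftrightarrow> (\<exists>P\<in>obj C. \<exists>p1 p2. p1 \<in> hom C P A \<and> p2 \<in> hom C P B \<and>
     (\<forall>X\<in>obj C. \<forall>f g. f \<in> hom C X A \<longrightarrow> g \<in> hom C X B \<longrightarrow>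
        (\<exists>!h. h \<in> hom C X P \<and> cmp C p1 h = f \<and> cmp C p2 h = g)))"

definition has_coproduct :: "('o, 'm, 'x) category_scheme \<Rightarrow> 'o \<Rightarrow> 'o \<Rightarrow> bool" where
  "has_coproduct C A B \<longleftrightarrow> (\<exists>P\<in>obj C. \<exists>i1 i2. i1 \<in> hom C A P \<and> i2 \<in> hom C B P \<and>
     (\<forall>X\<in>obj C. \<forall>f g. f \<in> hom C A X \<longrightarrow> g \<in> hom C B X \<longrightarrow>
        (\<exists>!h. h \<in> hom C P X \<and> cmp C h i1 = f \<and> cmp C h i2 = g)))"

text \<open>Abelian category (Freyd / Mac Lane VIII.3 form): zero object, binary
  products and coproducts, kernels and cokernels of all morphisms, every
  monomorphism is a kernel and every epimorphism is a cokernel.\<close>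
definition abelian_category :: "('o, 'm, 'x) category_scheme \<Rightarrow> bool" where
  "abelian_category C \<longleftrightarrow> is_category C \<and>
     (\<exists>Z. is_zero_obj C Z) \<and>
     (\<forall>A\<in>obj C. \<forall>B\<in>obj C. has_product C A B \<and> has_coproduct C A B) \<and>
     (\<forall>A\<in>obj C. \<forall>B\<in>obj C. \<forall>f. f \<in> hom C A B \<longrightarrow>
        (\<exists>K k. is_kernel C k K A f B) \<and> (\<exists>Q c. is_cokernel C c B Q f A)) \<and>
     (\<forall>A\<in>obj C. \<forall>B\<in>obj C. \<forall>f. is_mono C f A B \<longrightarrow> (\<exists>D g. is_kernel C f A B g D)) \<and>
     (\<forall>A\<in>obj C. \<forall>B\<in>obj C. \<forall>f. is_epi C f A B \<longrightarrow> (\<exists>D g. is_cokernel C f A B g D))"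

definition short_exact :: "('o, 'm, 'x) category_scheme \<Rightarrow> 'o \<Rightarrow> 'm \<Rightarrow> 'o \<Rightarrow> 'm \<Rightarrow> 'o \<Rightarrow> bool" where
  "short_exact C L f M g N \<longleftrightarrow> is_kernel C f L M g N \<and> is_cokernel C g M N f L"

text \<open>Subcategories are represented by their classes of objects.\<close>
definition cls_mult :: "('o, 'm, 'x) category_scheme \<Rightarrow> 'o set \<Rightarrow> 'o set \<Rightarrow> 'o set" where
  "cls_mult C X Y = {M \<in> obj C. \<exists>L N f g. L \<in> X \<and> N \<in> Y \<and> short_exact C L f M g N}"

definition cls_sub :: "('o, 'm, 'x) category_scheme \<Rightarrow> 'o set \<Rightarrow> 'o set" where
  "cls_sub C X = {M' \<in> obj C. \<exists>M\<in>X. \<exists>f. is_mono C f M' M}"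

definition cls_quot :: "('o, 'm, 'x) category_scheme \<Rightarrow> 'o set \<Rightarrow> 'o set" where
  "cls_quot C X = {M' \<in> obj C. \<exists>M\<in>X. \<exists>f. is_epi C f M M'}"

fun cls_pow :: "('o, 'm, 'x) category_scheme \<Rightarrow> 'o set \<Rightarrow> nat \<Rightarrow> 'o set" where
  "cls_pow C X 0 = {Z. is_zero_obj C Z}"
| "cls_pow C X (Suc n) = cls_mult C (cls_pow C X n) X"

definition cls_ext :: "('o, 'm, 'x) category_scheme \<Rightarrow> 'o set \<Rightarrow> 'o set" where
  "cls_ext C X = (\<Union>n. cls_pow C X n)"

definition ext_closed :: "('o, 'm, 'x) category_scheme \<Rightarrow> 'o set \<Rightarrow> bool" where
  "ext_closed C X \<longleftrightarrow> cls_mult C X X = X"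

end

theory Submission
  imports Defs
begin



definition opc :: "('o,'m) category \<Rightarrow> ('o,'m) category" where
  "opc C = \<lparr>obj = obj C, hom = (\<lambda>A B. hom C B A), cmp = (\<lambda>g f. cmp C f g), idm = idm C\<rparr>"

lemma opc_simps[simp]: "obj (opc C) = obj C" "hom (opc C) A B = hom C B A"
  "cmp (opc C) g f = cmp C f g" "idm (opc C) = idm C"
  by (simp_all add: opc_def)

lemma op_mono[simp]: "is_mono (opc C) f A B = is_epi C f B A"
  by (auto simp: is_mono_def is_epi_def)
lemma op_epi[simp]: "is_epi (opc C) f A B = is_mono C f B A"
  by (auto simp: is_mono_def is_epi_def)
lemma op_zobj[simp]: "is_zero_obj (opc C) Z = is_zero_obj C Z"
  by (auto simp: is_zero_obj_def)
lemma op_zobj_fun[simp]: "is_zero_obj (opc C) = is_zero_obj C"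
  by (rule ext) simp
lemma op_zm[simp]: "is_zero_mor (opc C) f A B = is_zero_mor C f B A"
  by (auto simp: is_zero_mor_def)
lemma op_ker[simp]: "is_kernel (opc C) k K A g B = is_cokernel C k A K g B"
  by (auto simp: is_kernel_def is_cokernel_def)
lemma op_coker[simp]: "is_cokernel (opc C) c B Q g A = is_kernel C c Q B g A"
  by (auto simp: is_kernel_def is_cokernel_def)
lemma op_prod[simp]: "has_product (opc C) A B = has_coproduct C A B"
  by (auto simp: has_product_def has_coproduct_def)
lemma op_coprod[simp]: "has_coproduct (opc C) A B = has_product C A B"
  by (auto simp: has_product_def has_coproduct_def)
lemma op_ses[simp]: "short_exact (opc C) N g M f L = short_exact C L f M g N"
  by (auto simp: short_exact_def)
lemma op_mult[simp]: "cls_mult (opc C) X Y = cls_mult C Y X"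
  by (auto simp: cls_mult_def)
lemma op_sub[simp]: "cls_sub (opc C) X = cls_quot C X"
  by (auto simp: cls_sub_def cls_quot_def)

lemma op_cat: assumes "is_category C" shows "is_category (opc C)"
  using assms unfolding is_category_def opc_simps
  apply (elim conjE; intro conjI)
  apply blast
  apply blast
  apply blast
  apply (intro ballI allI impI)
  apply (metis)
  done

lemma op_ab: assumes "abelian_category C" shows "abelian_category (opc C)"
proof -
  have a: "is_category C" "Ex (is_zero_obj C)"
    "\<forall>A\<in>obj C. \<forall>B\<in>obj C. has_product C A B \<and> has_coproduct C A B"
    "\<forall>A\<in>obj C. \<forall>B\<in>obj C. \<forall>f. f \<in> hom C A B \<longrightarrow>
        (\<exists>K k. is_kernel C k K A f B) \<and> (\<exists>Q c. is_cokernel C c B Q f A)"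
    "\<forall>A\<in>obj C. \<forall>B\<in>obj C. \<forall>f. is_mono C f A B \<longrightarrow> (\<exists>D g. is_kernel C f A B g D)"
    "\<forall>A\<in>obj C. \<forall>B\<in>obj C. \<forall>f. is_epi C f A B \<longrightarrow> (\<exists>D g. is_cokernel C f A B g D)"
    using assms unfolding abelian_category_def by blast+
  show ?thesis unfolding abelian_category_def
    using a by (simp add: op_cat)
qed





locale abcat = fixes C :: "('o,'m) category" assumes ab: "abelian_category C"
begin

lemma op_abcat: "abcat (opc C)" using ab op_ab by (unfold_locales) 

lemma cat: "is_category C" using ab by (simp add: abelian_category_def)

lemma comp: "f \<in> hom C A B \<Longrightarrow> g \<in> hom C B D \<Longrightarrow> A \<in> obj C \<Longrightarrow> B \<in> obj C \<Longrightarrow> D \<in> obj C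
   \<Longrightarrow> cmp C g f \<in> hom C A D"
  using cat unfolding is_category_def by blast

lemma assoc: "f \<in> hom C A B \<Longrightarrow> g \<in> hom C B D \<Longrightarrow> h \<in> hom C D E \<Longrightarrow>
  A \<in> obj C \<Longrightarrow> B \<in> obj C \<Longrightarrow> D \<in> obj C \<Longrightarrow> E \<in> obj C \<Longrightarrow>
  cmp C h (cmp C g f) = cmp C (cmp C h g) f"
  using cat unfolding is_category_def by blast

lemma idh: "A \<in> obj C \<Longrightarrow> idm C A \<in> hom C A A"
  using cat unfolding is_category_def by blast
lemma idl: "f \<in> hom C A B \<Longrightarrow> A \<in> obj C \<Longrightarrow> B \<in> obj C \<Longrightarrow> cmp C (idm C B) f = f"
  using cat unfolding is_category_def by blast
lemma idr: "f \<in> hom C A B \<Longrightarrow> A \<in> obj C \<Longrightarrow> B \<in> obj C \<Longrightarrow> cmp C f (idm C A) = f"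
  using cat unfolding is_category_def by blast

lemma zobj_obj: "is_zero_obj C Z \<Longrightarrow> Z \<in> obj C" by (simp add: is_zero_obj_def)
lemma zobj_from_uniq: "is_zero_obj C Z \<Longrightarrow> X \<in> obj C \<Longrightarrow> f \<in> hom C Z X \<Longrightarrow> g \<in> hom C Z X \<Longrightarrow> f = g"
  unfolding is_zero_obj_def by blast
lemma zobj_to_uniq: "is_zero_obj C Z \<Longrightarrow> X \<in> obj C \<Longrightarrow> f \<in> hom C X Z \<Longrightarrow> g \<in> hom C X Z \<Longrightarrow> f = g"
  unfolding is_zero_obj_def by blast
lemma zobj_from_ex: "is_zero_obj C Z \<Longrightarrow> X \<in> obj C \<Longrightarrow> \<exists>f. f \<in> hom C Z X"
  unfolding is_zero_obj_def by blast
lemma zobj_to_ex: "is_zero_obj C Z \<Longrightarrow> X \<in> obj C \<Longrightarrow> \<exists>f. f \<in> hom C X Z"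
  unfolding is_zero_obj_def by blast
lemma ex_zobj: "\<exists>Z. is_zero_obj C Z" using ab by (simp add: abelian_category_def)

lemma zm_hom: "is_zero_mor C f A B \<Longrightarrow> f \<in> hom C A B" by (simp add: is_zero_mor_def)

lemma zm_unique:
  assumes a: "is_zero_mor C f A B" "is_zero_mor C f' A B" and o: "A \<in> obj C" "B \<in> obj C"
  shows "f = f'"
proof -
  from a(1) obtain Z g h where z: "is_zero_obj C Z" "g \<in> hom C A Z" "h \<in> hom C Z B" "f = cmp C h g"
    unfolding is_zero_mor_def by blast
  from a(2) obtain Z' g' h' where z': "is_zero_obj C Z'" "g' \<in> hom C A Z'" "h' \<in> hom C Z' B" "f' = cmp C h' g'"
    unfolding is_zero_mor_def by blast
  have oZ: "Z \<in> obj C" "Z' \<in> obj C" using z z' zobj_obj by auto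
  obtain i where i: "i \<in> hom C Z Z'" using zobj_from_ex[OF z(1) oZ(2)] by blast
  have 1: "h = cmp C h' i" using zobj_from_uniq[OF z(1) o(2) z(3)] comp[OF i z'(3) oZ o(2)] by simp
  have 2: "g' = cmp C i g" using zobj_to_uniq[OF z'(1) o(1) z'(2)] comp[OF z(2) i o(1) oZ] by simp
  show ?thesis using z(4) z'(4) 1 2 assoc[OF z(2) i z'(3) o(1) oZ o(2)] by simp
qed

lemma zm_src: "is_zero_obj C A \<Longrightarrow> f \<in> hom C A B \<Longrightarrow> B \<in> obj C \<Longrightarrow> is_zero_mor C f A B"
  unfolding is_zero_mor_def
  apply (rule conjI, assumption)
  apply (rule exI[of _ A], rule exI[of _ "idm C A"], rule exI[of _ f])
  using idh idr zobj_obj by simp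

lemma zm_tgt: "is_zero_obj C B \<Longrightarrow> f \<in> hom C A B \<Longrightarrow> A \<in> obj C \<Longrightarrow> is_zero_mor C f A B"
  unfolding is_zero_mor_def
  apply (rule conjI, assumption)
  apply (rule exI[of _ B], rule exI[of _ f], rule exI[of _ "idm C B"])
  using idh idl zobj_obj by simp

lemma zm_ex: "A \<in> obj C \<Longrightarrow> B \<in> obj C \<Longrightarrow> \<exists>f. is_zero_mor C f A B"
proof -
  assume o: "A \<in> obj C" "B \<in> obj C"
  obtain Z where z: "is_zero_obj C Z" using ex_zobj by blast
  obtain g where g: "g \<in> hom C A Z" using zobj_to_ex[OF z o(1)] by blast
  obtain h where h: "h \<in> hom C Z B" using zobj_from_ex[OF z o(2)] by blast
  have "is_zero_mor C (cmp C h g) A B" unfolding is_zero_mor_def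
    using z g h comp[OF g h o(1) zobj_obj[OF z] o(2)] by blast
  then show ?thesis by blast
qed

lemma zm_compR:
  assumes a: "is_zero_mor C f A B" "h \<in> hom C B D" and o: "A \<in> obj C" "B \<in> obj C" "D \<in> obj C"
  shows "is_zero_mor C (cmp C h f) A D"
proof -
  from a(1) obtain Z g k where z: "is_zero_obj C Z" "g \<in> hom C A Z" "k \<in> hom C Z B" "f = cmp C k g"
    unfolding is_zero_mor_def by blast
  have oZ: "Z \<in> obj C" using z zobj_obj by auto
  have "cmp C h f = cmp C (cmp C h k) g" using z(4) assoc[OF z(2) z(3) a(2) o(1) oZ o(2) o(3)] by simp
  moreover have "cmp C h k \<in> hom C Z D" using comp[OF z(3) a(2) oZ o(2,3)] .
  moreover have "cmp C h f \<in> hom C A D" using comp[OF zm_hom[OF a(1)] a(2) o] .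
  ultimately show ?thesis unfolding is_zero_mor_def using z by blast
qed

lemma zm_compL:
  assumes a: "is_zero_mor C f A B" "g \<in> hom C X A" and o: "X \<in> obj C" "A \<in> obj C" "B \<in> obj C"
  shows "is_zero_mor C (cmp C f g) X B"
proof -
  from a(1) obtain Z g0 k where z: "is_zero_obj C Z" "g0 \<in> hom C A Z" "k \<in> hom C Z B" "f = cmp C k g0"
    unfolding is_zero_mor_def by blast
  have oZ: "Z \<in> obj C" using z zobj_obj by auto
  have "cmp C f g = cmp C k (cmp C g0 g)" using z(4) assoc[OF a(2) z(2) z(3) o(1) o(2) oZ o(3)] by simp
  moreover have "cmp C g0 g \<in> hom C X Z" using comp[OF a(2) z(2) o(1,2) oZ] .
  moreover have "cmp C f g \<in> hom C X B" using comp[OF a(2) zm_hom[OF a(1)] o] .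
  ultimately show ?thesis unfolding is_zero_mor_def using z by blast
qed

lemma mono_split:
  assumes "f \<in> hom C A B" "r \<in> hom C B A" "A \<in> obj C" "B \<in> obj C" "cmp C r f = idm C A"
  shows "is_mono C f A B"
  unfolding is_mono_def
proof (intro conjI ballI allI impI)
  fix X g h assume g: "g \<in> hom C X A" "h \<in> hom C X A" "cmp C f g = cmp C f h" and X: "X \<in> obj C"
  have "g = cmp C (cmp C r f) g" using idl[OF g(1) X assms(3)] assms(5) by simp
  also have "\<dots> = cmp C r (cmp C f g)" using assoc[OF g(1) assms(1) assms(2) X assms(3) assms(4) assms(3)] by simp
  also have "\<dots> = cmp C r (cmp C f h)" using g(3) by simp
  also have "\<dots> = cmp C (cmp C r f) h" using assoc[OF g(2) assms(1) assms(2) X assms(3) assms(4) assms(3)] by simp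
  also have "\<dots> = h" using idl[OF g(2) X assms(3)] assms(5) by simp
  finally show "g = h" .
qed (use assms in auto)

lemma mono_comp:
  assumes f: "is_mono C f A B" and g: "is_mono C g B D"
  shows "is_mono C (cmp C g f) A D"
  unfolding is_mono_def
proof (intro conjI ballI allI impI)
  have o: "A \<in> obj C" "B \<in> obj C" "D \<in> obj C" and h: "f \<in> hom C A B" "g \<in> hom C B D"
    using f g by (auto simp: is_mono_def)
  show "A \<in> obj C" "D \<in> obj C" "cmp C g f \<in> hom C A D" using o h comp by auto
  fix X x y assume x: "x \<in> hom C X A" "y \<in> hom C X A" "cmp C (cmp C g f) x = cmp C (cmp C g f) y"
    and X: "X \<in> obj C"
  have "cmp C g (cmp C f x) = cmp C g (cmp C f y)"
    using x(3) assoc[OF x(1) h X o] assoc[OF x(2) h X o] by simp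
  then have "cmp C f x = cmp C f y" using g X comp[OF x(1) h(1) X o(1,2)] comp[OF x(2) h(1) X o(1,2)]
    unfolding is_mono_def by blast
  then show "x = y" using f X x unfolding is_mono_def by blast
qed

lemma mono_cancel:
  assumes m: "is_mono C (cmp C g f) A D" and h: "f \<in> hom C A B" "g \<in> hom C B D" and B: "B \<in> obj C"
  shows "is_mono C f A B"
  unfolding is_mono_def
proof (intro conjI ballI allI impI)
  have o: "A \<in> obj C" "D \<in> obj C" using m by (auto simp: is_mono_def)
  show "A \<in> obj C" "B \<in> obj C" "f \<in> hom C A B" using o B h by auto
  fix X x y assume x: "x \<in> hom C X A" "y \<in> hom C X A" "cmp C f x = cmp C f y" and X: "X \<in> obj C"
  have "cmp C (cmp C g f) x = cmp C (cmp C g f) y"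
    using x(3) assoc[OF x(1) h X o(1) B o(2)] assoc[OF x(2) h X o(1) B o(2)] by simp
  then show "x = y" using m X x unfolding is_mono_def by blast
qed

lemma ex1_eq: "\<exists>!x. P x \<Longrightarrow> P a \<Longrightarrow> P b \<Longrightarrow> a = b" by blast

lemma kerD: assumes "is_kernel C k K A g B"
  shows "K \<in> obj C" "A \<in> obj C" "B \<in> obj C" "k \<in> hom C K A" "g \<in> hom C A B"
    "is_zero_mor C (cmp C g k) K B"
  using assms unfolding is_kernel_def by simp_all

lemma kerU: assumes "is_kernel C k K A g B" "X \<in> obj C" "u \<in> hom C X A" "is_zero_mor C (cmp C g u) X B"
  shows "\<exists>!v. v \<in> hom C X K \<and> cmp C k v = u"
  using assms unfolding is_kernel_def by simp

lemma kerE: assumes "is_kernel C k K A g B" "X \<in> obj C" "u \<in> hom C X A" "is_zero_mor C (cmp C g u) X B"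
  obtains v where "v \<in> hom C X K" "cmp C k v = u"
  using kerU[OF assms] by auto

lemma cokD: assumes "is_cokernel C c B Q g A"
  shows "A \<in> obj C" "B \<in> obj C" "Q \<in> obj C" "c \<in> hom C B Q" "g \<in> hom C A B"
    "is_zero_mor C (cmp C c g) A Q"
  using assms unfolding is_cokernel_def by simp_all

lemma cokU: assumes "is_cokernel C c B Q g A" "X \<in> obj C" "u \<in> hom C B X" "is_zero_mor C (cmp C u g) A X"
  shows "\<exists>!v. v \<in> hom C Q X \<and> cmp C v c = u"
  using assms unfolding is_cokernel_def by simp

lemma cokE: assumes "is_cokernel C c B Q g A" "X \<in> obj C" "u \<in> hom C B X" "is_zero_mor C (cmp C u g) A X"
  obtains v where "v \<in> hom C Q X" "cmp C v c = u"
  using cokU[OF assms] by auto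

lemma monoD: assumes "is_mono C f A B" shows "A \<in> obj C" "B \<in> obj C" "f \<in> hom C A B"
  using assms unfolding is_mono_def by simp_all

lemma monoC: assumes "is_mono C f A B" "X \<in> obj C" "g \<in> hom C X A" "h \<in> hom C X A" "cmp C f g = cmp C f h"
  shows "g = h"
  using assms unfolding is_mono_def by blast

lemma epiD: assumes "is_epi C f A B" shows "A \<in> obj C" "B \<in> obj C" "f \<in> hom C A B"
  using assms unfolding is_epi_def by simp_all

lemma epiC: assumes "is_epi C f A B" "X \<in> obj C" "g \<in> hom C B X" "h \<in> hom C B X" "cmp C g f = cmp C h f"
  shows "g = h"
  using assms unfolding is_epi_def by blast

lemma ker_mono:
  assumes k: "is_kernel C k K A g B" shows "is_mono C k K A"
  unfolding is_mono_def
proof (intro conjI ballI allI impI)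
  note o = kerD(1-3)[OF k] and h = kerD(4,5)[OF k] and z = kerD(6)[OF k]
  show "K \<in> obj C" "A \<in> obj C" "k \<in> hom C K A" using o h by auto
  fix X x y assume x: "x \<in> hom C X K" "y \<in> hom C X K" "cmp C k x = cmp C k y" and X: "X \<in> obj C"
  have "cmp C k x \<in> hom C X A" using comp[OF x(1) h(1) X o(1,2)] .
  moreover have "is_zero_mor C (cmp C g (cmp C k x)) X B"
    using zm_compL[OF z x(1) X o(1) o(3)] assoc[OF x(1) h X o] by simp
  ultimately have "\<exists>!v. v \<in> hom C X K \<and> cmp C k v = cmp C k x" by (rule kerU[OF k X])
  then show "x = y" by (rule ex1_eq) (use x in simp_all)
qed

lemma ker_of_coker:
  assumes m: "is_mono C m A B" and c: "is_cokernel C c B Q m A"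
  shows "is_kernel C m A B c Q"
proof -
  note o = cokD(1-3)[OF c] and h = cokD(5,4)[OF c] and z = cokD(6)[OF c]
  obtain D g where kg: "is_kernel C m A B g D" using ab m o unfolding abelian_category_def by blast
  note oD = kerD(3)[OF kg] and g = kerD(5)[OF kg] and gz = kerD(6)[OF kg]
  obtain v where v: "v \<in> hom C Q D" "cmp C v c = g" using cokE[OF c oD g gz] by blast
  show ?thesis unfolding is_kernel_def
  proof (intro conjI ballI allI impI)
    fix X u assume X: "X \<in> obj C" and u: "u \<in> hom C X B" "is_zero_mor C (cmp C c u) X Q"
    have "is_zero_mor C (cmp C g u) X D"
      using zm_compR[OF u(2) v(1) X o(3) oD] assoc[OF u(1) h(2) v(1) X o(2,3) oD] v(2) by simp
    then show "\<exists>!v. v \<in> hom C X A \<and> cmp C m v = u" by (rule kerU[OF kg X u(1)])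
  qed (fact o h z)+
qed

end




context abcat begin

lemma cok_epi: "is_cokernel C c B Q g A \<Longrightarrow> is_epi C c B Q"
  using abcat.ker_mono[OF op_abcat, of c Q B g A] by simp

lemma coker_of_ker: "is_epi C e A B \<Longrightarrow> is_kernel C k K A e B \<Longrightarrow> is_cokernel C e A B k K"
  using abcat.ker_of_coker[OF op_abcat, of e B A k K] by simp

lemma epi_cancel: "is_epi C (cmp C g f) A D \<Longrightarrow> f \<in> hom C A B \<Longrightarrow> g \<in> hom C B D \<Longrightarrow> B \<in> obj C
  \<Longrightarrow> is_epi C g B D"
  using abcat.mono_cancel[OF op_abcat, of f g D A B] by simp

lemma epi_comp: "is_epi C f A B \<Longrightarrow> is_epi C g B D \<Longrightarrow> is_epi C (cmp C g f) A D"
  using abcat.mono_comp[OF op_abcat, of g D B f A] by simp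

lemma epi_split: "f \<in> hom C A B \<Longrightarrow> s \<in> hom C B A \<Longrightarrow> A \<in> obj C \<Longrightarrow> B \<in> obj C
  \<Longrightarrow> cmp C f s = idm C B \<Longrightarrow> is_epi C f A B"
  using abcat.mono_split[OF op_abcat, of f B A s] by simp

lemma prodE:
  assumes "A \<in> obj C" "B \<in> obj C"
  obtains P p1 p2 where "P \<in> obj C" "p1 \<in> hom C P A" "p2 \<in> hom C P B"
    "\<And>Y f g. Y \<in> obj C \<Longrightarrow> f \<in> hom C Y A \<Longrightarrow> g \<in> hom C Y B \<Longrightarrow>
       \<exists>!h. h \<in> hom C Y P \<and> cmp C p1 h = f \<and> cmp C p2 h = g"
proof -
  have "has_product C A B" using ab assms by (simp add: abelian_category_def)
  then obtain P p1 p2 where P: "P \<in> obj C" "p1 \<in> hom C P A" "p2 \<in> hom C P B" and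
    u: "\<forall>X\<in>obj C. \<forall>f g. f \<in> hom C X A \<longrightarrow> g \<in> hom C X B \<longrightarrow>
        (\<exists>!h. h \<in> hom C X P \<and> cmp C p1 h = f \<and> cmp C p2 h = g)"
    unfolding has_product_def by blast
  show ?thesis by (rule that[OF P]) (use u in simp)
qed

lemma kerEx:
  assumes "f \<in> hom C A B" "A \<in> obj C" "B \<in> obj C"
  obtains K k where "is_kernel C k K A f B"
  using ab assms unfolding abelian_category_def by blast

lemma cokEx:
  assumes "f \<in> hom C A B" "A \<in> obj C" "B \<in> obj C"
  obtains Q c where "is_cokernel C c B Q f A"
  using ab assms unfolding abelian_category_def by blast

lemma mono_ker:
  assumes "is_mono C f A B"
  obtains D g where "is_kernel C f A B g D"
  using ab assms monoD[OF assms] unfolding abelian_category_def by blast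

lemma epi_crit:
  assumes e: "e \<in> hom C A I" and oA: "A \<in> obj C" and oI: "I \<in> obj C"
    and crit: "\<And>D t. D \<in> obj C \<Longrightarrow> t \<in> hom C I D \<Longrightarrow> is_zero_mor C (cmp C t e) A D \<Longrightarrow> is_zero_mor C t I D"
  shows "is_epi C e A I"
  unfolding is_epi_def
proof (intro conjI ballI allI impI)
  show "A \<in> obj C" "I \<in> obj C" "e \<in> hom C A I" by fact+
  fix X t t' assume X: "X \<in> obj C" and t: "t \<in> hom C I X" "t' \<in> hom C I X" "cmp C t e = cmp C t' e"
  obtain P p1 p2 where P: "P \<in> obj C" "p1 \<in> hom C P X" "p2 \<in> hom C P X"
    and u: "\<And>Y f g. Y \<in> obj C \<Longrightarrow> f \<in> hom C Y X \<Longrightarrow> g \<in> hom C Y X \<Longrightarrow>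
       \<exists>!h. h \<in> hom C Y P \<and> cmp C p1 h = f \<and> cmp C p2 h = g"
    by (rule prodE[OF X X]) blast
  obtain dl where dl: "dl \<in> hom C X P" "cmp C p1 dl = idm C X" "cmp C p2 dl = idm C X"
    using u[OF X idh[OF X] idh[OF X]] by blast
  have dlm: "is_mono C dl X P" by (rule mono_split[OF dl(1) P(2) X P(1) dl(2)])
  obtain D g where kg: "is_kernel C dl X P g D" by (rule mono_ker[OF dlm])
  note oD = kerD(3)[OF kg] and g = kerD(5)[OF kg] and gz = kerD(6)[OF kg]
  obtain pi where pi: "pi \<in> hom C I P" "cmp C p1 pi = t" "cmp C p2 pi = t'"
    using u[OF oI t(1) t(2)] by blast
  define te where "te = cmp C t e"
  have te: "te \<in> hom C A X" unfolding te_def by (rule comp[OF e t(1) oA oI X])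
  have pie: "cmp C pi e = cmp C dl te"
  proof (rule ex1_eq[OF u[OF oA te te]])
    show "cmp C pi e \<in> hom C A P \<and> cmp C p1 (cmp C pi e) = te \<and> cmp C p2 (cmp C pi e) = te"
      using comp[OF e pi(1) oA oI P(1)] assoc[OF e pi(1) P(2) oA oI P(1) X]
        assoc[OF e pi(1) P(3) oA oI P(1) X] pi t(3) te_def by simp
    show "cmp C dl te \<in> hom C A P \<and> cmp C p1 (cmp C dl te) = te \<and> cmp C p2 (cmp C dl te) = te"
      using comp[OF te dl(1) oA X P(1)] assoc[OF te dl(1) P(2) oA X P(1) X]
        assoc[OF te dl(1) P(3) oA X P(1) X] dl idl[OF te oA X] by simp
  qed
  define G where "G = cmp C g pi"
  have G: "G \<in> hom C I D" unfolding G_def by (rule comp[OF pi(1) g oI P(1) oD])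
  have "cmp C G e = cmp C (cmp C g dl) te"
    unfolding G_def using assoc[OF e pi(1) g oA oI P(1) oD] pie assoc[OF te dl(1) g oA X P(1) oD] by simp
  then have "is_zero_mor C (cmp C G e) A D" using zm_compL[OF gz te oA X oD] by simp
  then have Gz: "is_zero_mor C G I D" using crit[OF oD G] by simp
  obtain E d where kd: "is_kernel C d E I G D" using kerEx[OF G oI oD] by blast
  note oE = kerD(1)[OF kd] and d = kerD(4)[OF kd] and dz = kerD(6)[OF kd]
  have "is_zero_mor C (cmp C G (idm C I)) I D" using Gz idr[OF G oI oD] by simp
  then obtain w where w: "w \<in> hom C I E" "cmp C d w = idm C I"
    by (rule kerE[OF kd oI idh[OF oI]])
  have "is_zero_mor C (cmp C g (cmp C pi d)) E D"
    using dz assoc[OF d pi(1) g oE oI P(1) oD] G_def by simp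
  then obtain s where s: "s \<in> hom C E X" "cmp C dl s = cmp C pi d"
    by (rule kerE[OF kg oE comp[OF d pi(1) oE oI P(1)]])
  have td: "cmp C t d = s"
    using assoc[OF d pi(1) P(2) oE oI P(1) X] pi(2) s(2) assoc[OF s(1) dl(1) P(2) oE X P(1) X] dl(2)
      idl[OF s(1) oE X] by simp
  have td': "cmp C t' d = s"
    using assoc[OF d pi(1) P(3) oE oI P(1) X] pi(3) s(2) assoc[OF s(1) dl(1) P(3) oE X P(1) X] dl(3)
      idl[OF s(1) oE X] by simp
  have "t = cmp C t (cmp C d w)" using w(2) idr[OF t(1) oI X] by simp
  also have "\<dots> = cmp C s w" using assoc[OF w(1) d t(1) oI oE oI X] td by simp
  also have "\<dots> = cmp C t' (cmp C d w)" using assoc[OF w(1) d t(2) oI oE oI X] td' by simp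
  also have "\<dots> = t'" using w(2) idr[OF t(2) oI X] by simp
  finally show "t = t'" .
qed

end




context abcat begin

lemma img_epi:
  assumes f: "f \<in> hom C A B" and c0: "is_cokernel C c0 B Q f A" and m: "is_kernel C m I B c0 Q"
    and e: "e \<in> hom C A I" and fe: "f = cmp C m e"
  shows "is_epi C e A I"
proof -
  note oA = cokD(1)[OF c0] and oB = cokD(2)[OF c0] and oQ = cokD(3)[OF c0] and c0h = cokD(4)[OF c0]
  note oI = kerD(1)[OF m] and mh = kerD(4)[OF m] and c0m = kerD(6)[OF m]
  show ?thesis
  proof (rule epi_crit[OF e oA oI])
    fix D t assume oD: "D \<in> obj C" and t: "t \<in> hom C I D" and tz: "is_zero_mor C (cmp C t e) A D"
    obtain K k where kk: "is_kernel C k K I t D" by (rule kerEx[OF t oI oD])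
    note oK = kerD(1)[OF kk] and kh = kerD(4)[OF kk] and tk = kerD(6)[OF kk]
    obtain e' where e': "e' \<in> hom C A K" "cmp C k e' = e" by (rule kerE[OF kk oA e tz])
    have mk: "is_mono C (cmp C m k) K B" by (rule mono_comp[OF ker_mono[OF kk] ker_mono[OF m]])
    have mkh: "cmp C m k \<in> hom C K B" by (rule comp[OF kh mh oK oI oB])
    obtain R c' where cc: "is_cokernel C c' B R (cmp C m k) K" by (rule cokEx[OF mkh oK oB])
    have kc: "is_kernel C (cmp C m k) K B c' R" by (rule ker_of_coker[OF mk cc])
    note oR = cokD(3)[OF cc] and c'h = cokD(4)[OF cc] and c'z = cokD(6)[OF cc]
    have "cmp C c' f = cmp C (cmp C c' (cmp C m k)) e'"
      using fe e'(2) assoc[OF e'(1) kh mh oA oK oI oB] assoc[OF e'(1) mkh c'h oA oK oB oR] by simp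
    then have "is_zero_mor C (cmp C c' f) A R" using zm_compL[OF c'z e'(1) oA oK oR] by simp
    then obtain v where v: "v \<in> hom C Q R" "cmp C v c0 = c'" by (rule cokE[OF c0 oR c'h])
    have "cmp C c' m = cmp C v (cmp C c0 m)" using v(2) assoc[OF mh c0h v(1) oI oB oQ oR] by simp
    then have "is_zero_mor C (cmp C c' m) I R" using zm_compR[OF c0m v(1) oI oQ oR] by simp
    then obtain w where w: "w \<in> hom C I K" "cmp C (cmp C m k) w = m" by (rule kerE[OF kc oI mh])
    have "cmp C m (cmp C k w) = cmp C m (idm C I)"
      using assoc[OF w(1) kh mh oI oK oI oB] w(2) idr[OF mh oI oB] by simp
    then have kw: "cmp C k w = idm C I"
      by (rule monoC[OF ker_mono[OF m] oI comp[OF w(1) kh oI oK oI] idh[OF oI]])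
    have "t = cmp C (cmp C t k) w" using idr[OF t oI oD] kw assoc[OF w(1) kh t oI oK oI oD] by simp
    then show "is_zero_mor C t I D" using zm_compL[OF tk w(1) oI oK oD] by simp
  qed
qed

lemma img_mono:
  assumes "f \<in> hom C A B" "is_kernel C k0 K A f B" "is_cokernel C c A I k0 K" "n \<in> hom C I B"
    "f = cmp C n c"
  shows "is_mono C n I B"
  using abcat.img_epi[OF op_abcat, of f B A k0 K c I n] assms by simp

lemma sub_mult: "cls_sub C (cls_mult C S T) \<subseteq> cls_mult C (cls_sub C S) (cls_sub C T)"
proof
  fix M' assume "M' \<in> cls_sub C (cls_mult C S T)"
  then obtain M mu L N f g where oM': "M' \<in> obj C" and mu: "is_mono C mu M' M"
    and LN: "L \<in> S" "N \<in> T" and se: "short_exact C L f M g N"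
    unfolding cls_sub_def cls_mult_def by blast
  have fk: "is_kernel C f L M g N" and gc: "is_cokernel C g M N f L" using se by (simp_all add: short_exact_def)
  note oL = kerD(1)[OF fk] and oM = kerD(2)[OF fk] and oN = kerD(3)[OF fk]
    and fh = kerD(4)[OF fk] and gh = kerD(5)[OF fk]
  note muh = monoD(3)[OF mu]
  define h where "h = cmp C g mu"
  have hh: "h \<in> hom C M' N" unfolding h_def by (rule comp[OF muh gh oM' oM oN])
  obtain L' k where kk: "is_kernel C k L' M' h N" by (rule kerEx[OF hh oM' oN])
  note oL' = kerD(1)[OF kk] and kh = kerD(4)[OF kk] and hk = kerD(6)[OF kk]
  obtain Q c where cc: "is_cokernel C c M' Q k L'" by (rule cokEx[OF kh oL' oM'])
  note oQ = cokD(3)[OF cc]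
  have kc: "is_kernel C k L' M' c Q" by (rule ker_of_coker[OF ker_mono[OF kk] cc])
  have se': "short_exact C L' k M' c Q" using kc cc by (simp add: short_exact_def)
  have "is_zero_mor C (cmp C g (cmp C mu k)) L' N"
    using hk assoc[OF kh muh gh oL' oM' oM oN] h_def by simp
  then obtain a where a: "a \<in> hom C L' L" "cmp C f a = cmp C mu k"
    by (rule kerE[OF fk oL' comp[OF kh muh oL' oM' oM]])
  have "is_mono C (cmp C mu k) L' M" by (rule mono_comp[OF ker_mono[OF kk] mu])
  then have "is_mono C a L' L" using mono_cancel[OF _ a(1) fh oL] a(2) by simp
  then have L'S: "L' \<in> cls_sub C S" unfolding cls_sub_def using oL' LN(1) by blast
  obtain n where n: "n \<in> hom C Q N" "cmp C n c = h" by (rule cokE[OF cc oN hh hk])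
  have "is_mono C n Q N" by (rule img_mono[OF hh kk cc n(1) n(2)[symmetric]])
  then have QT: "Q \<in> cls_sub C T" unfolding cls_sub_def using oQ LN(2) by blast
  show "M' \<in> cls_mult C (cls_sub C S) (cls_sub C T)"
    unfolding cls_mult_def using oM' L'S QT se' by blast
qed

lemma quot_mult: "cls_quot C (cls_mult C S T) \<subseteq> cls_mult C (cls_quot C S) (cls_quot C T)"
  using abcat.sub_mult[OF op_abcat, of T S] by simp

end




context abcat begin

lemma sesD: assumes "short_exact C L f M g N"
  shows "is_kernel C f L M g N" "is_cokernel C g M N f L"
  using assms by (simp_all add: short_exact_def)

lemma assoc1: "cls_mult C (cls_mult C X Y) Z \<subseteq> cls_mult C X (cls_mult C Y Z)"
proof
  fix M assume "M \<in> cls_mult C (cls_mult C X Y) Z"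
  then obtain A C0 i p X1 Y1 j q where oM: "M \<in> obj C" and ses1: "short_exact C A i M p C0"
    and C0: "C0 \<in> Z" and X1: "X1 \<in> X" and Y1: "Y1 \<in> Y" and ses2: "short_exact C X1 j A q Y1"
    unfolding cls_mult_def by blast
  note ik = sesD(1)[OF ses1] and pc = sesD(2)[OF ses1] and jk = sesD(1)[OF ses2] and qc = sesD(2)[OF ses2]
  note oA = kerD(1)[OF ik] and oC0 = kerD(3)[OF ik] and ih = kerD(4)[OF ik] and ph = kerD(5)[OF ik]
    and piz = kerD(6)[OF ik]
  note oX1 = kerD(1)[OF jk] and oY1 = kerD(3)[OF jk] and jh = kerD(4)[OF jk] and qh = kerD(5)[OF jk]
  define ij where "ij = cmp C i j"
  have ijh: "ij \<in> hom C X1 M" unfolding ij_def by (rule comp[OF jh ih oX1 oA oM])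
  have ijm: "is_mono C ij X1 M" unfolding ij_def by (rule mono_comp[OF ker_mono[OF jk] ker_mono[OF ik]])
  obtain B c where cc: "is_cokernel C c M B ij X1" by (rule cokEx[OF ijh oX1 oM])
  note oB = cokD(3)[OF cc] and ch = cokD(4)[OF cc] and cz = cokD(6)[OF cc]
  have ijk: "is_kernel C ij X1 M c B" by (rule ker_of_coker[OF ijm cc])
  define ci where "ci = cmp C c i"
  have cih: "ci \<in> hom C A B" unfolding ci_def by (rule comp[OF ih ch oA oM oB])
  have "is_zero_mor C (cmp C ci j) X1 B"
    using cz assoc[OF jh ih ch oX1 oA oM oB] ci_def ij_def by simp
  then obtain u where u: "u \<in> hom C Y1 B" "cmp C u q = ci" by (rule cokE[OF qc oB cih])
  have "is_zero_mor C (cmp C p ij) X1 C0"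
    using zm_compL[OF piz jh oX1 oA oC0] assoc[OF jh ih ph oX1 oA oM oC0] ij_def by simp
  then obtain w where w: "w \<in> hom C B C0" "cmp C w c = p" by (rule cokE[OF cc oC0 ph])
  have jci: "is_kernel C j X1 A ci B" unfolding is_kernel_def
  proof (intro conjI ballI allI impI)
    show "X1 \<in> obj C" "A \<in> obj C" "B \<in> obj C" "j \<in> hom C X1 A" "ci \<in> hom C A B" by fact+
    show "is_zero_mor C (cmp C ci j) X1 B" by fact
    fix V x assume oV: "V \<in> obj C" and x: "x \<in> hom C V A" "is_zero_mor C (cmp C ci x) V B"
    have ixh: "cmp C i x \<in> hom C V M" by (rule comp[OF x(1) ih oV oA oM])
    have "is_zero_mor C (cmp C c (cmp C i x)) V B" using x(2) assoc[OF x(1) ih ch oV oA oM oB] ci_def by simp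
    then obtain y where y: "y \<in> hom C V X1" "cmp C ij y = cmp C i x" by (rule kerE[OF ijk oV ixh])
    have "cmp C i (cmp C j y) = cmp C i x" using y(2) assoc[OF y(1) jh ih oV oX1 oA oM] ij_def by simp
    then have jy: "cmp C j y = x" by (rule monoC[OF ker_mono[OF ik] oV comp[OF y(1) jh oV oX1 oA] x(1)])
    show "\<exists>!y. y \<in> hom C V X1 \<and> cmp C j y = x"
    proof (rule ex1I[of _ y])
      show "y \<in> hom C V X1 \<and> cmp C j y = x" using y(1) jy by simp
      fix y' assume "y' \<in> hom C V X1 \<and> cmp C j y' = x"
      then show "y' = y" using monoC[OF ker_mono[OF jk] oV, of y' y] y(1) jy by simp
    qed
  qed
  have um: "is_mono C u Y1 B" by (rule img_mono[OF cih jci qc u(1) u(2)[symmetric]])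
  have pepi: "is_epi C (cmp C w c) M C0" using cok_epi[OF pc] w(2) by simp
  have wepi: "is_epi C w B C0" by (rule epi_cancel[OF pepi ch w(1) oB])
  have wuh: "cmp C w u \<in> hom C Y1 C0" by (rule comp[OF u(1) w(1) oY1 oB oC0])
  have wcu: "is_cokernel C w B C0 u Y1" unfolding is_cokernel_def
  proof (intro conjI ballI allI impI)
    show "Y1 \<in> obj C" "B \<in> obj C" "C0 \<in> obj C" "w \<in> hom C B C0" "u \<in> hom C Y1 B" by fact+
    obtain z0 where z0: "is_zero_mor C z0 Y1 C0" using zm_ex[OF oY1 oC0] by blast
    have "cmp C (cmp C w u) q = cmp C p i"
      using assoc[OF qh u(1) w(1) oA oY1 oB oC0] u(2) ci_def assoc[OF ih ch w(1) oA oM oB oC0] w(2) by simp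
    then have "is_zero_mor C (cmp C (cmp C w u) q) A C0" using piz by simp
    then have "cmp C (cmp C w u) q = cmp C z0 q"
      using zm_unique[OF _ zm_compL[OF z0 qh oA oY1 oC0] oA oC0] by simp
    then have "cmp C w u = z0" by (rule epiC[OF cok_epi[OF qc] oC0 wuh zm_hom[OF z0]])
    then show "is_zero_mor C (cmp C w u) Y1 C0" using z0 by simp
    fix V y assume oV: "V \<in> obj C" and y: "y \<in> hom C B V" "is_zero_mor C (cmp C y u) Y1 V"
    have ych: "cmp C y c \<in> hom C M V" by (rule comp[OF ch y(1) oM oB oV])
    have "cmp C (cmp C y c) i = cmp C (cmp C y u) q"
      using assoc[OF ih ch y(1) oA oM oB oV] ci_def u(2) assoc[OF qh u(1) y(1) oA oY1 oB oV] by simp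
    then have "is_zero_mor C (cmp C (cmp C y c) i) A V" using zm_compL[OF y(2) qh oA oY1 oV] by simp
    then obtain z where z: "z \<in> hom C C0 V" "cmp C z p = cmp C y c" by (rule cokE[OF pc oV ych])
    have zwh: "cmp C z w \<in> hom C B V" by (rule comp[OF w(1) z(1) oB oC0 oV])
    have "cmp C (cmp C z w) c = cmp C y c" using assoc[OF ch w(1) z(1) oM oB oC0 oV] w(2) z(2) by simp
    then have zw: "cmp C z w = y" by (rule epiC[OF cok_epi[OF cc] oV zwh y(1)])
    show "\<exists>!z. z \<in> hom C C0 V \<and> cmp C z w = y"
    proof (rule ex1I[of _ z])
      show "z \<in> hom C C0 V \<and> cmp C z w = y" using z(1) zw by simp
      fix z' assume "z' \<in> hom C C0 V \<and> cmp C z' w = y"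
      then show "z' = z" using epiC[OF wepi oV, of z' z] z(1) zw by simp
    qed
  qed
  have uk: "is_kernel C u Y1 B w C0" by (rule ker_of_coker[OF um wcu])
  have "B \<in> cls_mult C Y Z" unfolding cls_mult_def short_exact_def using oB Y1 C0 uk wcu by blast
  moreover have "short_exact C X1 ij M c B" unfolding short_exact_def using ijk cc by simp
  ultimately show "M \<in> cls_mult C X (cls_mult C Y Z)" unfolding cls_mult_def using oM X1 by blast
qed

lemma assoc2: "cls_mult C X (cls_mult C Y Z) \<subseteq> cls_mult C (cls_mult C X Y) Z"
  using abcat.assoc1[OF op_abcat, of Z Y X] by simp

end




context abcat begin

lemma zobj_mono: assumes "is_zero_obj C Z" "z \<in> hom C Z M" "M \<in> obj C" shows "is_mono C z Z M"
  unfolding is_mono_def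
proof (intro conjI ballI allI impI)
  show "Z \<in> obj C" "M \<in> obj C" "z \<in> hom C Z M" using assms zobj_obj by auto
  fix X g h assume "X \<in> obj C" "g \<in> hom C X Z" "h \<in> hom C X Z"
  then show "g = h" using zobj_to_uniq[OF assms(1)] by blast
qed

lemma ses_zero_right:
  assumes se: "short_exact C L f M g Z" and Z: "is_zero_obj C Z"
  obtains v where "v \<in> hom C M L" "cmp C f v = idm C M" "cmp C v f = idm C L"
proof -
  note fk = sesD(1)[OF se]
  note oL = kerD(1)[OF fk] and oM = kerD(2)[OF fk] and oZ = kerD(3)[OF fk] and fh = kerD(4)[OF fk]
    and gh = kerD(5)[OF fk]
  have "is_zero_mor C (cmp C g (idm C M)) M Z" using zm_tgt[OF Z gh oM] idr[OF gh oM oZ] by simp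
  then obtain v where v: "v \<in> hom C M L" "cmp C f v = idm C M" by (rule kerE[OF fk oM idh[OF oM]])
  have "cmp C f (cmp C v f) = cmp C f (idm C L)"
    using assoc[OF fh v(1) fh oL oM oL oM] v(2) idl[OF fh oL oM] idr[OF fh oL oM] by simp
  then have "cmp C v f = idm C L"
    by (rule monoC[OF ker_mono[OF fk] oL comp[OF fh v(1) oL oM oL] idh[OF oL]])
  then show ?thesis using that v by blast
qed

lemma shift:
  assumes se: "short_exact C L f M g Z" and Z: "is_zero_obj C Z" and Z': "is_zero_obj C Z'"
  shows "\<exists>z v. short_exact C Z' z M v L"
proof -
  note fk = sesD(1)[OF se]
  note oL = kerD(1)[OF fk] and oM = kerD(2)[OF fk] and fh = kerD(4)[OF fk]
  have oZ': "Z' \<in> obj C" using Z' zobj_obj by auto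
  obtain v where v: "v \<in> hom C M L" "cmp C f v = idm C M" "cmp C v f = idm C L"
    by (rule ses_zero_right[OF se Z])
  obtain z where z: "z \<in> hom C Z' M" using zobj_from_ex[OF Z' oM] by blast
  have zm: "is_mono C z Z' M" by (rule zobj_mono[OF Z' z oM])
  have vc: "is_cokernel C v M L z Z'" unfolding is_cokernel_def
  proof (intro conjI ballI allI impI)
    show "Z' \<in> obj C" "M \<in> obj C" "L \<in> obj C" "v \<in> hom C M L" "z \<in> hom C Z' M" by fact+
    show "is_zero_mor C (cmp C v z) Z' L" by (rule zm_src[OF Z' comp[OF z v(1) oZ' oM oL] oL])
    fix X y assume oX: "X \<in> obj C" and y: "y \<in> hom C M X" "is_zero_mor C (cmp C y z) Z' X"
    show "\<exists>!w. w \<in> hom C L X \<and> cmp C w v = y"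
    proof (rule ex1I[of _ "cmp C y f"])
      show "cmp C y f \<in> hom C L X \<and> cmp C (cmp C y f) v = y"
        using comp[OF fh y(1) oL oM oX] assoc[OF v(1) fh y(1) oM oL oM oX] v(2) idr[OF y(1) oM oX] by simp
      fix w assume w: "w \<in> hom C L X \<and> cmp C w v = y"
      then show "w = cmp C y f"
        using assoc[OF fh v(1) _ oL oM oL oX, of w] v(3) idr[of w L X] oL oX by simp
    qed
  qed
  have "is_kernel C z Z' M v L" by (rule ker_of_coker[OF zm vc])
  then show ?thesis using vc unfolding short_exact_def by blast
qed

lemma zz:
  assumes se: "short_exact C L f M g Z" and Z: "is_zero_obj C Z" and L: "is_zero_obj C L"
  shows "is_zero_obj C M"
proof -
  note fk = sesD(1)[OF se]
  note oL = kerD(1)[OF fk] and oM = kerD(2)[OF fk] and fh = kerD(4)[OF fk]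
  obtain v where v: "v \<in> hom C M L" "cmp C f v = idm C M" "cmp C v f = idm C L"
    by (rule ses_zero_right[OF se Z])
  show ?thesis unfolding is_zero_obj_def
  proof (intro conjI ballI)
    show "M \<in> obj C" by fact
    fix X assume oX: "X \<in> obj C"
    obtain a where a: "a \<in> hom C L X" using zobj_from_ex[OF L oX] by blast
    obtain b where b: "b \<in> hom C X L" using zobj_to_ex[OF L oX] by blast
    show "\<exists>!h. h \<in> hom C M X"
    proof (rule ex1I[of _ "cmp C a v"])
      show "cmp C a v \<in> hom C M X" by (rule comp[OF v(1) a oM oL oX])
      fix h assume h: "h \<in> hom C M X"
      have "h = cmp C (cmp C h f) v" using idr[OF h oM oX] v(2) assoc[OF v(1) fh h oM oL oM oX] by simp
      also have "cmp C h f = a" by (rule zobj_from_uniq[OF L oX comp[OF fh h oL oM oX] a])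
      finally show "h = cmp C a v" .
    qed
    show "\<exists>!h. h \<in> hom C X M"
    proof (rule ex1I[of _ "cmp C f b"])
      show "cmp C f b \<in> hom C X M" by (rule comp[OF b fh oX oL oM])
      fix h assume h: "h \<in> hom C X M"
      have "h = cmp C f (cmp C v h)" using idl[OF h oX oM] v(2) assoc[OF h v(1) fh oX oM oL oM] by simp
      also have "cmp C v h = b" by (rule zobj_to_uniq[OF L oX comp[OF h v(1) oX oM oL] b])
      finally show "h = cmp C f b" .
    qed
  qed
qed

lemma zzz:
  assumes L: "is_zero_obj C L" and M: "is_zero_obj C M" and N: "is_zero_obj C N"
    and f: "f \<in> hom C L M" and g: "g \<in> hom C M N"
  shows "short_exact C L f M g N"
proof -
  have oL: "L \<in> obj C" and oM: "M \<in> obj C" and oN: "N \<in> obj C" using L M N zobj_obj by auto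
  have gc: "is_cokernel C g M N f L" unfolding is_cokernel_def
  proof (intro conjI ballI allI impI)
    show "L \<in> obj C" "M \<in> obj C" "N \<in> obj C" "g \<in> hom C M N" "f \<in> hom C L M" by fact+
    show "is_zero_mor C (cmp C g f) L N" by (rule zm_src[OF L comp[OF f g oL oM oN] oN])
    fix X y assume oX: "X \<in> obj C" and y: "y \<in> hom C M X" "is_zero_mor C (cmp C y f) L X"
    obtain a where a: "a \<in> hom C N X" using zobj_from_ex[OF N oX] by blast
    show "\<exists>!w. w \<in> hom C N X \<and> cmp C w g = y"
    proof (rule ex1I[of _ a])
      show "a \<in> hom C N X \<and> cmp C a g = y"
        using a zobj_from_uniq[OF M oX comp[OF g a oM oN oX] y(1)] by simp
      fix w assume "w \<in> hom C N X \<and> cmp C w g = y"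
      then show "w = a" using zobj_from_uniq[OF N oX _ a] by simp
    qed
  qed
  have "is_kernel C f L M g N" by (rule ker_of_coker[OF zobj_mono[OF L f oM] gc])
  then show ?thesis using gc by (simp add: short_exact_def)
qed

lemma incl_right:
  assumes X: "X \<subseteq> obj C" and Z0: "Z0 \<in> Y" "is_zero_obj C Z0"
  shows "X \<subseteq> cls_mult C X Y"
proof
  fix M assume MX: "M \<in> X"
  then have oM: "M \<in> obj C" using X by auto
  have oZ: "Z0 \<in> obj C" using Z0 zobj_obj by auto
  obtain g where g: "g \<in> hom C M Z0" using zobj_to_ex[OF Z0(2) oM] by blast
  have gz: "is_zero_mor C g M Z0" by (rule zm_tgt[OF Z0(2) g oM])
  have im: "is_mono C (idm C M) M M" by (rule mono_split[OF idh[OF oM] idh[OF oM] oM oM idl[OF idh[OF oM] oM oM]])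
  have gc: "is_cokernel C g M Z0 (idm C M) M" unfolding is_cokernel_def
  proof (intro conjI ballI allI impI)
    show "M \<in> obj C" "Z0 \<in> obj C" "g \<in> hom C M Z0" "idm C M \<in> hom C M M" using oM oZ g idh by auto
    show "is_zero_mor C (cmp C g (idm C M)) M Z0" using gz idr[OF g oM oZ] by simp
    fix V y assume oV: "V \<in> obj C" and y: "y \<in> hom C M V" "is_zero_mor C (cmp C y (idm C M)) M V"
    obtain a where a: "a \<in> hom C Z0 V" using zobj_from_ex[OF Z0(2) oV] by blast
    show "\<exists>!w. w \<in> hom C Z0 V \<and> cmp C w g = y"
    proof (rule ex1I[of _ a])
      have "cmp C a g = y"
        using zm_unique[OF zm_compR[OF gz a oM oZ oV] y(2) oM oV] idr[OF y(1) oM oV] by simp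
      then show "a \<in> hom C Z0 V \<and> cmp C a g = y" using a by simp
      fix w assume "w \<in> hom C Z0 V \<and> cmp C w g = y"
      then show "w = a" using zobj_from_uniq[OF Z0(2) oV _ a] by simp
    qed
  qed (fact oM)
  have "is_kernel C (idm C M) M M g Z0" by (rule ker_of_coker[OF im gc])
  then have "short_exact C M (idm C M) M g Z0" using gc by (simp add: short_exact_def)
  then show "M \<in> cls_mult C X Y" unfolding cls_mult_def using oM MX Z0 by blast
qed

lemma incl_left:
  assumes X: "X \<subseteq> obj C" and Z0: "Z0 \<in> Y" "is_zero_obj C Z0"
  shows "X \<subseteq> cls_mult C Y X"
  using abcat.incl_right[OF op_abcat, of X Z0 Y] assms by simp

end




context abcat begin

abbreviation "Zs \<equiv> {Z. is_zero_obj C Z}"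

lemma mult_mono: "X \<subseteq> X' \<Longrightarrow> Y \<subseteq> Y' \<Longrightarrow> cls_mult C X Y \<subseteq> cls_mult C X' Y'"
  unfolding cls_mult_def by blast

lemma mult_obj: "cls_mult C X Y \<subseteq> obj C"
  unfolding cls_mult_def by blast

lemma pow_obj: "cls_pow C X n \<subseteq> obj C"
  by (cases n) (auto simp: zobj_obj mult_obj[THEN subsetD])

lemma ext_obj: "cls_ext C X \<subseteq> obj C"
  unfolding cls_ext_def using pow_obj by blast

lemma right_zero_shift: "cls_mult C X Zs \<subseteq> cls_mult C Zs X"
proof
  fix M assume "M \<in> cls_mult C X Zs"
  then obtain L Z f g where M: "M \<in> obj C" "L \<in> X" "is_zero_obj C Z" "short_exact C L f M g Z"
    unfolding cls_mult_def by blast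
  obtain z v where "short_exact C Z z M v L" using shift[OF M(4) M(3) M(3)] by blast
  then show "M \<in> cls_mult C Zs X" unfolding cls_mult_def using M by blast
qed

lemma zs_zs: "cls_mult C Zs Zs \<subseteq> Zs"
proof
  fix M assume "M \<in> cls_mult C Zs Zs"
  then obtain L Z f g where M: "is_zero_obj C L" "is_zero_obj C Z" "short_exact C L f M g Z"
    unfolding cls_mult_def by blast
  show "M \<in> Zs" using zz[OF M(3) M(2) M(1)] by simp
qed

lemma pow_rz: "cls_mult C (cls_pow C X a) Zs \<subseteq> cls_pow C X a"
proof (induction a)
  case 0
  then show ?case using zs_zs by simp
next
  case (Suc n)
  have "cls_mult C (cls_pow C X (Suc n)) Zs \<subseteq> cls_mult C (cls_pow C X n) (cls_mult C X Zs)"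
    using assoc1 by simp
  also have "\<dots> \<subseteq> cls_mult C (cls_pow C X n) (cls_mult C Zs X)"
    by (rule mult_mono[OF order_refl right_zero_shift])
  also have "\<dots> \<subseteq> cls_mult C (cls_mult C (cls_pow C X n) Zs) X" by (rule assoc2)
  also have "\<dots> \<subseteq> cls_mult C (cls_pow C X n) X" by (rule mult_mono[OF Suc.IH order_refl])
  finally show ?case by simp
qed

lemma pow_add: "cls_mult C (cls_pow C X a) (cls_pow C X b) \<subseteq> cls_pow C X (a + b)"
proof (induction b)
  case 0
  then show ?case using pow_rz by simp
next
  case (Suc b)
  have "cls_mult C (cls_pow C X a) (cls_pow C X (Suc b)) \<subseteq>
      cls_mult C (cls_mult C (cls_pow C X a) (cls_pow C X b)) X"
    using assoc2 by simp
  also have "\<dots> \<subseteq> cls_mult C (cls_pow C X (a + b)) X" by (rule mult_mono[OF Suc.IH order_refl])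
  finally show ?case by simp
qed

lemma ext_ext: "cls_mult C (cls_ext C X) (cls_ext C X) \<subseteq> cls_ext C X"
proof
  fix M assume "M \<in> cls_mult C (cls_ext C X) (cls_ext C X)"
  then obtain L N f g a b where M: "M \<in> obj C" "L \<in> cls_pow C X a" "N \<in> cls_pow C X b"
    "short_exact C L f M g N"
    unfolding cls_mult_def cls_ext_def by blast
  then have "M \<in> cls_mult C (cls_pow C X a) (cls_pow C X b)" unfolding cls_mult_def by blast
  then have "M \<in> cls_pow C X (a + b)" using pow_add by blast
  then show "M \<in> cls_ext C X" unfolding cls_ext_def by blast
qed

lemma ext_min:
  assumes "X \<subseteq> Y" "Zs \<subseteq> Y" "cls_mult C Y Y \<subseteq> Y"
  shows "cls_ext C X \<subseteq> Y"
proof -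
  have "cls_pow C X n \<subseteq> Y" for n
  proof (induction n)
    case 0 then show ?case using assms by simp
  next
    case (Suc n)
    have "cls_mult C (cls_pow C X n) X \<subseteq> cls_mult C Y Y" by (rule mult_mono[OF Suc.IH assms(1)])
    then show ?case using assms(3) by simp
  qed
  then show ?thesis unfolding cls_ext_def by blast
qed

lemma zs_ext: "Zs \<subseteq> cls_ext C X"
  unfolding cls_ext_def by (metis UN_upper cls_pow.simps(1) iso_tuple_UNIV_I)

lemma sub_ext: assumes "X \<subseteq> obj C" shows "X \<subseteq> cls_ext C X"
proof -
  obtain Z where Z: "is_zero_obj C Z" using ex_zobj by blast
  have "X \<subseteq> cls_mult C Zs X" by (rule incl_left[OF assms _ Z]) (use Z in simp)
  also have "\<dots> = cls_pow C X 1" by simp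
  also have "\<dots> \<subseteq> cls_ext C X" unfolding cls_ext_def by blast
  finally show ?thesis .
qed

lemma ext_swap:
  assumes S: "S \<subseteq> obj C" and T: "T \<subseteq> obj C" and ZS: "ZS \<in> S" "is_zero_obj C ZS"
    and ZT: "ZT \<in> T" "is_zero_obj C ZT"
  shows "cls_ext C (cls_mult C S T) \<subseteq> cls_ext C (cls_mult C T S)"
proof (rule ext_min)
  let ?Y = "cls_ext C (cls_mult C T S)"
  have TSY: "cls_mult C T S \<subseteq> ?Y" by (rule sub_ext[OF mult_obj])
  have "S \<subseteq> ?Y" using incl_left[OF S ZT] TSY by blast
  moreover have "T \<subseteq> ?Y" using incl_right[OF T ZS] TSY by blast
  ultimately have "cls_mult C S T \<subseteq> cls_mult C ?Y ?Y" by (rule mult_mono)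
  then show "cls_mult C S T \<subseteq> ?Y" using ext_ext by blast
  show "Zs \<subseteq> ?Y" by (rule zs_ext)
  show "cls_mult C ?Y ?Y \<subseteq> ?Y" by (rule ext_ext)
qed

lemma ext_T:
  assumes T: "T \<subseteq> obj C" and ZT: "ZT \<in> T" "is_zero_obj C ZT" and ec: "ext_closed C T"
  shows "cls_ext C T = T"
proof
  have TT: "cls_mult C T T = T" using ec by (simp add: ext_closed_def)
  have "Zs \<subseteq> T"
  proof
    fix Z assume Z: "Z \<in> Zs"
    have oZ: "Z \<in> obj C" "ZT \<in> obj C" using Z ZT zobj_obj by auto
    obtain f where f: "f \<in> hom C ZT Z" using zobj_from_ex[OF ZT(2) oZ(1)] by blast
    obtain g where g: "g \<in> hom C Z ZT" using zobj_to_ex[OF ZT(2) oZ(1)] by blast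
    have "short_exact C ZT f Z g ZT" using zzz[OF ZT(2) _ ZT(2) f g] Z by simp
    then have "Z \<in> cls_mult C T T" unfolding cls_mult_def using oZ ZT by blast
    then show "Z \<in> T" using TT by simp
  qed
  then show "cls_ext C T \<subseteq> T" using ext_min[of T T] TT by simp
  show "T \<subseteq> cls_ext C T" by (rule sub_ext[OF T])
qed

lemma mult_Union_r: "cls_mult C X (\<Union>n. F n) \<subseteq> (\<Union>n. cls_mult C X (F n))"
  unfolding cls_mult_def by blast

lemma comm:
  assumes TS: "cls_mult C T S \<subseteq> cls_mult C (cls_ext C S) T"
  shows "cls_mult C T (cls_ext C S) \<subseteq> cls_mult C (cls_ext C S) T"
proof -
  let ?SE = "cls_ext C S"
  have SESE: "cls_mult C ?SE ?SE \<subseteq> ?SE" by (rule ext_ext)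
  have "cls_mult C T (cls_pow C S n) \<subseteq> cls_mult C ?SE T" for n
  proof (induction n)
    case 0
    have "cls_mult C T Zs \<subseteq> cls_mult C Zs T" by (rule right_zero_shift)
    also have "\<dots> \<subseteq> cls_mult C ?SE T" by (rule mult_mono[OF zs_ext order_refl])
    finally show ?case by simp
  next
    case (Suc n)
    have "cls_mult C T (cls_pow C S (Suc n)) \<subseteq> cls_mult C (cls_mult C T (cls_pow C S n)) S"
      using assoc2 by simp
    also have "\<dots> \<subseteq> cls_mult C (cls_mult C ?SE T) S" by (rule mult_mono[OF Suc.IH order_refl])
    also have "\<dots> \<subseteq> cls_mult C ?SE (cls_mult C T S)" by (rule assoc1)
    also have "\<dots> \<subseteq> cls_mult C ?SE (cls_mult C ?SE T)" by (rule mult_mono[OF order_refl TS])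
    also have "\<dots> \<subseteq> cls_mult C (cls_mult C ?SE ?SE) T" by (rule assoc2)
    also have "\<dots> \<subseteq> cls_mult C ?SE T" by (rule mult_mono[OF SESE order_refl])
    finally show ?case .
  qed
  then have "(\<Union>n. cls_mult C T (cls_pow C S n)) \<subseteq> cls_mult C ?SE T" by blast
  then show ?thesis using mult_Union_r[of T "cls_pow C S"] unfolding cls_ext_def by blast
qed

lemma closure:
  assumes TS: "cls_mult C T S \<subseteq> cls_mult C (cls_ext C S) T" and TT: "cls_mult C T T \<subseteq> T"
  shows "cls_mult C (cls_mult C (cls_ext C S) T) (cls_mult C (cls_ext C S) T) \<subseteq> cls_mult C (cls_ext C S) T"
proof -
  let ?SE = "cls_ext C S"
  have "cls_mult C (cls_mult C ?SE T) (cls_mult C ?SE T) \<subseteq> cls_mult C ?SE (cls_mult C T (cls_mult C ?SE T))"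
    by (rule assoc1)
  also have "\<dots> \<subseteq> cls_mult C ?SE (cls_mult C (cls_mult C T ?SE) T)"
    by (rule mult_mono[OF order_refl assoc2])
  also have "\<dots> \<subseteq> cls_mult C ?SE (cls_mult C (cls_mult C ?SE T) T)"
    by (rule mult_mono[OF order_refl mult_mono[OF comm[OF TS] order_refl]])
  also have "\<dots> \<subseteq> cls_mult C ?SE (cls_mult C ?SE (cls_mult C T T))"
    by (rule mult_mono[OF order_refl assoc1])
  also have "\<dots> \<subseteq> cls_mult C ?SE (cls_mult C ?SE T)"
    by (rule mult_mono[OF order_refl mult_mono[OF order_refl TT]])
  also have "\<dots> \<subseteq> cls_mult C (cls_mult C ?SE ?SE) T" by (rule assoc2)
  also have "\<dots> \<subseteq> cls_mult C ?SE T" by (rule mult_mono[OF ext_ext order_refl])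
  finally show ?thesis .
qed

end

theorem proposition2p2:
  fixes C :: "('o, 'm) category" and S T :: "'o set"
  assumes "abelian_category C"
    and "S \<subseteq> obj C" and "T \<subseteq> obj C"
    and "\<exists>Z\<in>S. is_zero_obj C Z" and "\<exists>Z\<in>T. is_zero_obj C Z"
  shows "cls_sub C (cls_mult C S T) \<subseteq> cls_mult C (cls_sub C S) (cls_sub C T) \<and>
         cls_quot C (cls_mult C S T) \<subseteq> cls_mult C (cls_quot C S) (cls_quot C T) \<and>
         (cls_ext C (cls_mult C S T) \<subseteq> cls_mult C (cls_ext C S) (cls_ext C T)
         \<longleftrightarrow> cls_ext C (cls_mult C T S) \<subseteq> cls_mult C (cls_ext C S) (cls_ext C T)) \<and>
         (ext_closed C T \<longrightarrow>
         (cls_ext C (cls_mult C S T) \<subseteq> cls_mult C (cls_ext C S) (cls_ext C T)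
          \<longleftrightarrow> cls_mult C T S \<subseteq> cls_mult C (cls_ext C S) T))"
proof -
  interpret abcat C by unfold_locales (rule assms(1))
  obtain ZS where ZS: "ZS \<in> S" "is_zero_obj C ZS" using assms(4) by blast
  obtain ZT where ZT: "ZT \<in> T" "is_zero_obj C ZT" using assms(5) by blast
  have eq: "cls_ext C (cls_mult C S T) = cls_ext C (cls_mult C T S)"
    using ext_swap[OF assms(2,3) ZS ZT] ext_swap[OF assms(3,2) ZT ZS] by blast
  have d: "cls_ext C (cls_mult C S T) \<subseteq> cls_mult C (cls_ext C S) (cls_ext C T)
          \<longleftrightarrow> cls_mult C T S \<subseteq> cls_mult C (cls_ext C S) T" if ec: "ext_closed C T"
  proof -
    have ET: "cls_ext C T = T" by (rule ext_T[OF assms(3) ZT ec])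
    have TT: "cls_mult C T T \<subseteq> T" using ec by (simp add: ext_closed_def)
    show ?thesis unfolding ET
    proof
      assume i: "cls_ext C (cls_mult C S T) \<subseteq> cls_mult C (cls_ext C S) T"
      have "cls_mult C T S \<subseteq> cls_ext C (cls_mult C T S)" by (rule sub_ext[OF mult_obj])
      then show "cls_mult C T S \<subseteq> cls_mult C (cls_ext C S) T" using i eq by simp
    next
      assume iii: "cls_mult C T S \<subseteq> cls_mult C (cls_ext C S) T"
      show "cls_ext C (cls_mult C S T) \<subseteq> cls_mult C (cls_ext C S) T"
      proof (rule ext_min)
        show "cls_mult C S T \<subseteq> cls_mult C (cls_ext C S) T"
          by (rule mult_mono[OF sub_ext[OF assms(2)] order_refl])
        have "Zs \<subseteq> cls_mult C Zs T" by (rule incl_right[OF _ ZT]) (auto simp: zobj_obj)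
        moreover have "cls_mult C Zs T \<subseteq> cls_mult C (cls_ext C S) T" by (rule mult_mono[OF zs_ext order_refl])
        ultimately show "Zs \<subseteq> cls_mult C (cls_ext C S) T" by blast
        show "cls_mult C (cls_mult C (cls_ext C S) T) (cls_mult C (cls_ext C S) T) \<subseteq> cls_mult C (cls_ext C S) T"
          by (rule closure[OF iii TT])
      qed
    qed
  qed
  show ?thesis using sub_mult[of S T] quot_mult[of S T] eq d by simp
qed



end
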